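(* Let $d\ge1$ and let $c_1\ge c_2\ge\cdots\ge c_d\ge 0$ be real numbers. Define $\nu\in\mathbb R^{2\times\cdots\times2}$ with binary indices $i_1,\dots,i_d\in\{0,1\}$ by $\nu(i_1,\dots,i_d)=\max\{c_k: i_k=1\}$ if some $i_k=1$, and $\nu(0,\dots,0)=0$. Then $\nu$ admits an exact TT-decomposition all of whose TT-ranks are at most $2$. *)

theory Defs
  imports Complex_Main
begin

text \<open>Tensors of order d with binary mode sizes are functions on index lists
  i of length d with entries in {0,1}; position k-1 of the list is the index i_k.\<close>

definition binary_index :: "nat \<Rightarrow> nat list \<Rightarrow> bool" where
  "binary_index d i \<longleftrightarrow> length i = d \<and> set i \<subseteq> {0, 1}"

text \<open>Exact TT-decomposition with TT-ranks r 0 = 1, r 1, ..., r (d-1), r d = 1 and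
  cores G k (k = 1..d), G k a j b being the entry G_k(a, j, b) with a < r (k-1),
  j the mode index, b < r k:
  T(i_1..i_d) = sum over alpha of prod_k G_k(alpha_(k-1), i_k, alpha_k).\<close>

definition tt_repr ::
  "nat \<Rightarrow> (nat \<Rightarrow> nat) \<Rightarrow> (nat \<Rightarrow> nat \<Rightarrow> nat \<Rightarrow> nat \<Rightarrow> real) \<Rightarrow> (nat list \<Rightarrow> real) \<Rightarrow> bool" where
  "tt_repr d r G T \<longleftrightarrow>
     r 0 = 1 \<and> r d = 1 \<and> (\<forall>k\<le>d. r k \<ge> 1) \<and>
     (\<forall>i. binary_index d i \<longrightarrow>
        T i = (\<Sum>\<alpha>\<in>{\<alpha>. (\<forall>k\<le>d. \<alpha> k < r k) \<and> (\<forall>k>d. \<alpha> k = 0)}.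
                 \<Prod>k\<in>{1..d}. G k (\<alpha> (k - 1)) (i ! (k - 1)) (\<alpha> k)))"

text \<open>The tensor nu; c k (k < d) stands for c_(k+1).\<close>

definition nu_tensor :: "nat \<Rightarrow> (nat \<Rightarrow> real) \<Rightarrow> nat list \<Rightarrow> real" where
  "nu_tensor d c i =
     (if \<exists>k<d. i ! k = 1 then Max {c k | k. k < d \<and> i ! k = 1} else 0)"

end

theory Submission
  imports Defs
begin

definition Gc :: "nat \<Rightarrow> (nat \<Rightarrow> real) \<Rightarrow> nat \<Rightarrow> nat \<Rightarrow> nat \<Rightarrow> nat \<Rightarrow> real" where
  "Gc d c k a j b = (if k = d then (if a = 0 then (if j = 1 then c (k-1) else 0) else 1)
     else (if a = 0 then (if j = 0 \<and> b = 0 then 1 else if j = 1 \<and> b = 1 then c (k-1) else 0)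
           else (if b = 1 then 1 else 0)))"

lemma prefix_prod:
  fixes i :: "nat list" and \<alpha> :: "nat \<Rightarrow> nat"
  assumes bi: "binary_index d i"
    and a0: "\<alpha> 0 = 0" and ab: "\<And>k. k < d \<Longrightarrow> \<alpha> k < 2"
    and n: "n < d"
  shows "(\<Prod>k\<in>{1..n}. Gc d c k (\<alpha> (k - 1)) (i ! (k - 1)) (\<alpha> k)) =
     (if \<forall>k\<le>n. \<alpha> k = (if \<exists>m<k. i ! m = 1 then 1 else 0)
      then (if \<exists>m<n. i ! m = 1 then c (LEAST m. i ! m = 1) else 1) else 0)"
  using n
proof (induction n)
  case 0
  then show ?case using a0 by auto
next
  case (Suc n)
  note IH = Suc.IH[OF Suc_lessD[OF Suc.prems]]
  have ibin: "i ! n = 0 \<or> i ! n = 1" using bi Suc.prems unfolding binary_index_def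
    by (metis Suc_lessD insert_iff nth_mem singletonD subsetD)
  have an: "\<alpha> n < 2" "\<alpha> (Suc n) < 2" using ab Suc.prems by auto
  have split: "(\<forall>k\<le>Suc n. P k) \<longleftrightarrow> (\<forall>k\<le>n. P k) \<and> P (Suc n)" for P
    using le_Suc_eq by auto
  have seenS: "(\<exists>m<Suc n. i ! m = 1) \<longleftrightarrow> (\<exists>m<n. i ! m = 1) \<or> i ! n = 1"
    using less_Suc_eq by auto
  have G: "Gc d c (Suc n) (\<alpha> n) (i ! n) (\<alpha> (Suc n)) =
     (if \<alpha> n = 0 then (if i ! n = 0 \<and> \<alpha> (Suc n) = 0 then 1 else if i ! n = 1 \<and> \<alpha> (Suc n) = 1 then c n else 0)
      else (if \<alpha> (Suc n) = 1 then 1 else 0))"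
    using Suc.prems unfolding Gc_def by auto
  have P: "(\<Prod>k\<in>{1..Suc n}. Gc d c k (\<alpha> (k - 1)) (i ! (k - 1)) (\<alpha> k)) =
     Gc d c (Suc n) (\<alpha> n) (i ! n) (\<alpha> (Suc n)) * (\<Prod>k\<in>{1..n}. Gc d c k (\<alpha> (k - 1)) (i ! (k - 1)) (\<alpha> k))"
    by (subst prod.nat_ivl_Suc') auto
  show ?case
  proof (cases "\<forall>k\<le>n. \<alpha> k = (if \<exists>m<k. i ! m = 1 then 1 else 0)")
    case False
    then have nS: "\<not> (\<forall>k\<le>Suc n. \<alpha> k = (if \<exists>m<k. i ! m = 1 then 1 else 0))" using False le_SucI by blast
    have Z: "(\<Prod>k\<in>{1..n}. Gc d c k (\<alpha> (k - 1)) (i ! (k - 1)) (\<alpha> k)) = 0"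
      using IH False by (simp only: if_False)
    show ?thesis by (subst if_not_P[OF nS], subst P) (simp only: Z mult_zero_right)
  next
    case True
    have alpn: "\<alpha> n = (if \<exists>m<n. i ! m = 1 then 1 else 0)" using True by auto
    show ?thesis
    proof (cases "\<exists>m<n. i ! m = 1")
      case True2: True
      then show ?thesis using P IH True split alpn G an seenS by auto
    next
      case False2: False
      have L: "i ! n = 1 \<Longrightarrow> (LEAST m. i ! m = 1) = n"
        by (rule Least_equality) (use False2 in \<open>auto simp: not_less[symmetric]\<close>)
      show ?thesis using P IH True split alpn G an seenS False2 ibin L by auto
    qed
  qed
qed

lemma antitone_c:
  assumes "\<And>k. Suc k < d \<Longrightarrow> c (Suc k) \<le> (c k :: real)"
  shows "L \<le> k \<Longrightarrow> k < d \<Longrightarrow> c k \<le> c L"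
proof (induction k)
  case 0 then show ?case by auto
next
  case (Suc k)
  show ?case
  proof (cases "L = Suc k")
    case False
    then have "c (Suc k) \<le> c k" using assms Suc.prems by auto
    moreover have "c k \<le> c L" using Suc False by auto
    ultimately show ?thesis by linarith
  qed auto
qed

theorem mainTheorem5:
  fixes d :: nat and c :: "nat \<Rightarrow> real"
  assumes "d \<ge> 1"
    and "\<And>k. Suc k < d \<Longrightarrow> c (Suc k) \<le> c k"
    and "\<And>k. k < d \<Longrightarrow> c k \<ge> 0"
  shows "\<exists>r G. tt_repr d r G (nu_tensor d c) \<and> (\<forall>k\<le>d. r k \<le> 2)"
proof -
  define r :: "nat \<Rightarrow> nat" where "r k = (if k = 0 \<or> k = d then 1 else 2)" for k
  define A where "A = {\<alpha>. (\<forall>k\<le>d. \<alpha> k < r k) \<and> (\<forall>k>d. \<alpha> k = 0)}"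
  have finA: "finite A"
  proof (rule finite_subset)
    show "A \<subseteq> (\<lambda>xs k. if k \<le> d then xs ! k else 0) ` {xs. set xs \<subseteq> {0..<2::nat} \<and> length xs = Suc d}"
    proof
      fix \<alpha> assume "\<alpha> \<in> A"
      moreover have "\<And>k. r k \<le> 2" by (simp add: r_def)
      ultimately have h: "\<forall>k\<le>d. \<alpha> k < 2" "\<forall>k>d. \<alpha> k = 0" unfolding A_def
        using order_less_le_trans by blast+
      show "\<alpha> \<in> (\<lambda>xs k. if k \<le> d then xs ! k else 0) ` {xs. set xs \<subseteq> {0..<2::nat} \<and> length xs = Suc d}"
      proof
        show "\<alpha> = (\<lambda>k. if k \<le> d then map \<alpha> [0..<Suc d] ! k else 0)"
          using h by (auto simp: fun_eq_iff simp del: upt_Suc)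
        show "map \<alpha> [0..<Suc d] \<in> {xs. set xs \<subseteq> {0..<2::nat} \<and> length xs = Suc d}"
          using h by auto
      qed
    qed
    show "finite ((\<lambda>xs k. if k \<le> d then xs ! k else 0) ` {xs. set xs \<subseteq> {0..<2::nat} \<and> length xs = Suc d})"
      by (intro finite_imageI finite_lists_length_eq) auto
  qed
  have "tt_repr d r (Gc d c) (nu_tensor d c)"
    unfolding tt_repr_def
  proof (intro conjI allI impI)
    show "r 0 = 1" "r d = 1" using assms(1) by (auto simp: r_def)
    show "1 \<le> r k" for k by (auto simp: r_def)
  next
    fix i assume bi: "binary_index d i"
    define a0 where "a0 k = (if k < d \<and> (\<exists>m<k. i ! m = 1) then 1 else 0::nat)" for k
    have a0A: "a0 \<in> A" unfolding A_def a0_def r_def by auto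
    define F where "F \<alpha> = (\<Prod>k\<in>{1..d}. Gc d c k (\<alpha> (k - 1)) (i ! (k - 1)) (\<alpha> k))" for \<alpha>
    obtain n where dn: "d = Suc n" using assms(1) by (cases d) auto
    have nu: "(\<exists>m<d. i ! m = 1) \<Longrightarrow> nu_tensor d c i = c (LEAST m. i ! m = 1)"
    proof -
      assume ex: "\<exists>m<d. i ! m = 1"
      then obtain m0 where m0: "m0 < d" "i ! m0 = 1" by blast
      define L where "L = (LEAST m. i ! m = 1)"
      have L1: "i ! L = 1" unfolding L_def by (rule LeastI[of _ m0]) (rule m0(2))
      have Lle: "\<And>m. i ! m = 1 \<Longrightarrow> L \<le> m" unfolding L_def by (rule Least_le)
      have Ld: "L < d" using Lle[OF m0(2)] m0(1) by linarith
      have S: "{c k | k. k < d \<and> i ! k = 1} = c ` {k. k < d \<and> i ! k = 1}" by blast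
      have fin: "finite (c ` {k. k < d \<and> i ! k = 1})" by simp
      have "Max (c ` {k. k < d \<and> i ! k = 1}) = c L"
      proof (rule Max_eqI[OF fin])
        show "c L \<in> c ` {k. k < d \<and> i ! k = 1}" using L1 Ld by blast
      next
        fix y assume "y \<in> c ` {k. k < d \<and> i ! k = 1}"
        then obtain k where k: "k < d" "i ! k = 1" "y = c k" by blast
        show "y \<le> c L" using antitone_c[where d=d and c=c, OF assms(2) Lle[OF k(2)] k(1)] k(3) by simp
      qed
      then have "Max {c k | k. k < d \<and> i ! k = 1} = c L" using S by simp
      then show ?thesis using ex unfolding nu_tensor_def L_def by auto
    qed
    have Fval: "F \<alpha> = (if \<alpha> = a0 then nu_tensor d c i else 0)" if aA: "\<alpha> \<in> A" for \<alpha>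
    proof -
      have rl: "\<forall>k\<le>d. \<alpha> k < r k" and agt: "\<And>k. k > d \<Longrightarrow> \<alpha> k = 0"
        using aA unfolding A_def by auto
      have r0: "r 0 = 1" "r d = 1" and r2: "\<And>k. r k \<le> 2" by (auto simp: r_def)
      have al0: "\<alpha> 0 = 0" using rl r0 by (metis le0 less_one)
      have ad: "\<alpha> d = 0" using rl r0 by (metis order_refl less_one)
      have ab: "\<And>k. k < d \<Longrightarrow> \<alpha> k < 2" using rl r2 by (meson less_imp_le_nat order_less_le_trans)
      have nd: "n < d" using dn by simp
      note PP = prefix_prod[where d=d and i=i and \<alpha>=\<alpha> and n=n and c=c, OF bi al0 ab nd]
      have F1: "F \<alpha> = Gc d c d (\<alpha> n) (i ! n) (\<alpha> d) * (\<Prod>k\<in>{1..n}. Gc d c k (\<alpha> (k - 1)) (i ! (k - 1)) (\<alpha> k))"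
        unfolding F_def dn by (subst prod.nat_ivl_Suc') auto
      have Gd: "Gc d c d (\<alpha> n) (i ! n) (\<alpha> d) = (if \<alpha> n = 0 then (if i ! n = 1 then c n else 0) else 1)"
        unfolding Gc_def dn by auto
      have eqiff: "(\<alpha> = a0) \<longleftrightarrow> (\<forall>k\<le>n. \<alpha> k = (if \<exists>m<k. i ! m = 1 then 1 else 0))"
      proof
        assume "\<alpha> = a0" then show "\<forall>k\<le>n. \<alpha> k = (if \<exists>m<k. i ! m = 1 then 1 else 0)"
          unfolding a0_def dn by auto
      next
        assume h: "\<forall>k\<le>n. \<alpha> k = (if \<exists>m<k. i ! m = 1 then 1 else 0)"
        show "\<alpha> = a0"
        proof
          fix k show "\<alpha> k = a0 k"
          proof (cases "k \<le> n")
            case True then show ?thesis using h unfolding a0_def dn by auto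
          next
            case False then have "k = Suc n \<or> k > Suc n" by auto
            then show ?thesis using ad agt unfolding a0_def dn by auto
          qed
        qed
      qed
      have seenS: "(\<exists>m<d. i ! m = 1) \<longleftrightarrow> (\<exists>m<n. i ! m = 1) \<or> i ! n = 1"
        unfolding dn using less_Suc_eq by auto
      have an: "\<alpha> n < 2" using ab dn by auto
      show ?thesis
      proof (cases "\<alpha> = a0")
        case False
        then have nS: "\<not> (\<forall>k\<le>n. \<alpha> k = (if \<exists>m<k. i ! m = 1 then 1 else 0))" using eqiff by blast
        have Z: "(\<Prod>k\<in>{1..n}. Gc d c k (\<alpha> (k - 1)) (i ! (k - 1)) (\<alpha> k)) = 0"
          by (simp only: PP if_not_P[OF nS])
        show ?thesis using False by (subst F1) (simp only: Z mult_zero_right if_False)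
      next
        case True
        have Cnd: "\<forall>k\<le>n. \<alpha> k = (if \<exists>m<k. i ! m = 1 then 1 else 0)" using True eqiff by blast
        have alpn: "\<alpha> n = (if \<exists>m<n. i ! m = 1 then 1 else 0)" using Cnd by blast
        have W: "(\<Prod>k\<in>{1..n}. Gc d c k (\<alpha> (k - 1)) (i ! (k - 1)) (\<alpha> k)) =
             (if \<exists>m<n. i ! m = 1 then c (LEAST m. i ! m = 1) else 1)"
          by (simp only: PP if_P[OF Cnd])
        show ?thesis
        proof (cases "\<exists>m<n. i ! m = 1")
          case True2: True
          have sd: "\<exists>m<d. i ! m = 1" using True2 seenS by blast
          have "F \<alpha> = c (LEAST m. i ! m = 1)"
            using F1 W Gd alpn True2 by simp
          then show ?thesis using nu[OF sd] True by simp
        next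
          case False2: False
          have L: "i ! n = 1 \<Longrightarrow> (LEAST m. i ! m = 1) = n"
            by (rule Least_equality) (use False2 in \<open>auto simp: not_less[symmetric]\<close>)
          have nz: "\<not> (\<exists>m<d. i ! m = 1) \<Longrightarrow> nu_tensor d c i = 0" unfolding nu_tensor_def by auto
          note a0n = alpn[unfolded if_not_P[OF False2]]
          note Wn = W[unfolded if_not_P[OF False2]]
          have Fa: "F \<alpha> = (if i ! n = 1 then c n else 0)"
            using F1 Wn Gd a0n by simp
          show ?thesis
          proof (cases "i ! n = 1")
            case True3: True
            have sd: "\<exists>m<d. i ! m = 1" using True3 seenS by blast
            show ?thesis using Fa True3 nu[OF sd] L True by simp
          next
            case False3: False
            have "\<not> (\<exists>m<d. i ! m = 1)" using False2 False3 seenS by blast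
            then show ?thesis using Fa False3 nz True by simp
          qed
        qed
      qed
    qed
    have "sum F A = F a0 + sum F (A - {a0})" using finA a0A by (rule sum.remove)
    also have "sum F (A - {a0}) = 0" by (rule sum.neutral) (use Fval in auto)
    finally have "sum F A = nu_tensor d c i" using Fval a0A by auto
    then show "nu_tensor d c i = (\<Sum>\<alpha>\<in>{\<alpha>. (\<forall>k\<le>d. \<alpha> k < r k) \<and> (\<forall>k>d. \<alpha> k = 0)}.
                 \<Prod>k\<in>{1..d}. Gc d c k (\<alpha> (k - 1)) (i ! (k - 1)) (\<alpha> k))"
      unfolding A_def F_def by simp
  qed
  moreover have "\<forall>k\<le>d. r k \<le> 2" by (auto simp: r_def)
  ultimately show ?thesis by blast
qed

end
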